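(* Let $k$ be a finite field of odd characteristic, $A$ a finite $k$-algebra with involution $*$ fixing $k$ pointwise, $(S,\eta)$ a self-dual $A$-module, $W=S\oplus S$ with symplectic form $B$ and $\chi=\psi\circ B$, and let $\mathcal L$, $\mathcal E_L$ be as in the context. For $L,L'\in\mathcal L$ define $\gamma_{L',L}$ on $\mathcal E_L$ by $$(\gamma_{L',L}f)(w)=\frac{1}{\sqrt{|L|\,|L\cap L'|}}\sum_{\zeta'\in L'}\overline{\chi(w,\zeta')}\,f(w+\zeta')\qquad(f\in\mathcal E_L,\ w\in W).$$ Then $\gamma_{L',L}$ maps $\mathcal E_L$ into $\mathcal E_{L'}$, and for all $L,L',L''\in\mathcal L$: (a) $\langle\gamma_{L',L}f,h\rangle=\langle f,\gamma_{L,L'}h\rangle$ for $f\in\mathcal E_L$, $h\in\mathcal E_{L'}$; (b) $\langle\gamma_{L',L}f,\gamma_{L',L}h\rangle=\langle f,h\rangle$ for $f,h\in\mathcal E_L$; (c) $\gamma_{L,L'}\circ\gamma_{L',L}=\gamma_{L,L}=\mathrm{id}_{\mathcal E_L}$; (d) $\gamma_{L'',L'}\circ\gamma_{L',L}=\mu(L'',L',L)\,\gamma_{L'',L}$, where $$\mu(L'',L',L)=\sqrt{\frac{|L''\cap L'|}{|L\cap L''|\,|L'\cap L|\,|L|}}\;S_W(L;L',L''),\qquad S_W(L;L',L'')=\sum_{\zeta\in L\cap(L'+L'')}\chi(\zeta',\zeta''),$$ in which each $\zeta\in L\cap(L'+L'')$ is written as $\zeta=\zeta'+\zeta''$ with $\zeta'\in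 L'$, $\zeta''\in L''$ (the summand does not depend on this choice); (e) $\tau_g\circ\gamma_{L',L}=\gamma_{gL',gL}\circ\tau_g$ for every $g\in G$. Consequently $\Gamma=\{\gamma_{L',L}\}$ is a $G$-equivariant connection on the Lagrangian bundle with multiplier $\mu$.
   Context: A self-dual $A$-module is a left $A$-module $S$, finite-dimensional over $k$, together with a non-degenerate, $k$-bilinear, symmetric, $A$-balanced pairing $\eta:S\times S\to k$ ($A$-balanced: $\eta(a^*s,t)=\eta(s,at)$ for $a\in A$, $s,t\in S$). $S$ is a right $A$-module via $s.a=a^*s$, and $W=S\oplus S$ is a right $A$-module componentwise. $B((s,t),(s',t'))=\eta(s,t')-\eta(t,s')$ is a non-degenerate symplectic $k$-form on $W$. Fix a non-trivial character $\psi$ of $(k,+)$ and put $\chi(u,v)=\psi(B(u,v))$ for $u,v\in W$. A Lagrangian is a right $A$-submodule $L\subseteq W$ with $L=L^\perp$ (orthogonal with respect to $B$); $\mathcal L$ is the set of Lagrangians. For $L\in\mathcal L$, $\mathcal E_L=\{f:W\to\mathbb C\mid f(w+\zeta)=\chi(w,\zeta)f(w)\ \forall w\in W,\zeta\in L\}$ with inner product $\langle f,h\rangle=\sum_{w\in W}f(w)\overline{h(w)}$. $G=SL_*(2,A)$ (matrices $\begin{pmatrix}a&b\\c&d\end{pmatrix}$ over $A$ with $ab^*=ba^*$, $cd^*=dc^*$, $a^*c=c^*a$, $b^*d=d^*b$, $ad^*-bc^*=a^*d-c^*b=1$) acts on $W$, written $w\mapsto gw$, either by $gw=g.w$ (matrix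 times column vector, $g.(s,t)=(as+bt,cs+dt)$) or by $gw=w.g^{-1}$ (row vector times matrix); this action preserves $B$, and it is assumed (as in the paper) to map Lagrangians to Lagrangians, $gL=\{gw:w\in L\}$. The action on functions is $(\tau_gf)(w)=f(g^{-1}w)$, so $\tau_g:\mathcal E_L\to\mathcal E_{gL}$. *)

theory Defs
  imports Complex_Main "HOL-Library.Product_Plus"
begin

definition k_algebra_with_involution :: "('k::field \<Rightarrow> 'a::ring_1) \<Rightarrow> ('a \<Rightarrow> 'a) \<Rightarrow> bool" where
  "k_algebra_with_involution alg star \<longleftrightarrow>
     alg 1 = 1 \<and> (\<forall>x y. alg (x + y) = alg x + alg y) \<and> (\<forall>x y. alg (x * y) = alg x * alg y) \<and>
     (\<forall>x a. alg x * a = a * alg x) \<and>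
     (\<forall>a b. star (a + b) = star a + star b) \<and> (\<forall>a b. star (a * b) = star b * star a) \<and>
     (\<forall>a. star (star a) = a) \<and> (\<forall>x. star (alg x) = alg x)"

definition self_dual_module ::
  "('k::field \<Rightarrow> 'a::ring_1) \<Rightarrow> ('a \<Rightarrow> 'a) \<Rightarrow> ('a \<Rightarrow> 's::ab_group_add \<Rightarrow> 's) \<Rightarrow> ('s \<Rightarrow> 's \<Rightarrow> 'k) \<Rightarrow> bool" where
  "self_dual_module alg star smul \<eta> \<longleftrightarrow>
     (\<forall>a s t. smul a (s + t) = smul a s + smul a t) \<and> (\<forall>a b s. smul (a + b) s = smul a s + smul b s) \<and>
     (\<forall>a b s. smul (a * b) s = smul a (smul b s)) \<and> (\<forall>s. smul 1 s = s) \<and>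
     (\<forall>s s' t. \<eta> (s + s') t = \<eta> s t + \<eta> s' t) \<and> (\<forall>s t t'. \<eta> s (t + t') = \<eta> s t + \<eta> s t') \<and>
     (\<forall>c s t. \<eta> (smul (alg c) s) t = c * \<eta> s t) \<and> (\<forall>c s t. \<eta> s (smul (alg c) t) = c * \<eta> s t) \<and>
     (\<forall>s t. \<eta> s t = \<eta> t s) \<and>
     (\<forall>s. (\<forall>t. \<eta> s t = 0) \<longrightarrow> s = 0) \<and>
     (\<forall>a s t. \<eta> (smul (star a) s) t = \<eta> s (smul a t))"

definition nontrivial_character :: "('k::field \<Rightarrow> complex) \<Rightarrow> bool" where
  "nontrivial_character \<psi> \<longleftrightarrow> (\<forall>x y. \<psi> (x + y) = \<psi> x * \<psi> y) \<and> (\<forall>x. cmod (\<psi> x) = 1) \<and> (\<exists>x. \<psi> x \<noteq> 1)"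

definition symB :: "('s \<Rightarrow> 's \<Rightarrow> 'k::field) \<Rightarrow> 's \<times> 's \<Rightarrow> 's \<times> 's \<Rightarrow> 'k" where
  "symB \<eta> w w' = \<eta> (fst w) (snd w') - \<eta> (snd w) (fst w')"

definition chi :: "('k::field \<Rightarrow> complex) \<Rightarrow> ('s \<Rightarrow> 's \<Rightarrow> 'k) \<Rightarrow> 's \<times> 's \<Rightarrow> 's \<times> 's \<Rightarrow> complex" where
  "chi \<psi> \<eta> u v = \<psi> (symB \<eta> u v)"

definition rmul :: "('a \<Rightarrow> 'a) \<Rightarrow> ('a \<Rightarrow> 's \<Rightarrow> 's) \<Rightarrow> 's \<times> 's \<Rightarrow> 'a \<Rightarrow> 's \<times> 's" where
  "rmul star smul w a = (smul (star a) (fst w), smul (star a) (snd w))"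

definition perp :: "('s \<Rightarrow> 's \<Rightarrow> 'k::field) \<Rightarrow> ('s \<times> 's) set \<Rightarrow> ('s \<times> 's) set" where
  "perp \<eta> L = {w. \<forall>z\<in>L. symB \<eta> w z = 0}"

definition lagrangians ::
  "('a \<Rightarrow> 'a) \<Rightarrow> ('a \<Rightarrow> 's::ab_group_add \<Rightarrow> 's) \<Rightarrow> ('s \<Rightarrow> 's \<Rightarrow> 'k::field) \<Rightarrow> ('s \<times> 's) set set" where
  "lagrangians star smul \<eta> = {L. 0 \<in> L \<and> (\<forall>x\<in>L. \<forall>y\<in>L. x + y \<in> L) \<and> (\<forall>x\<in>L. - x \<in> L) \<and>
       (\<forall>x\<in>L. \<forall>a. rmul star smul x a \<in> L) \<and> perp \<eta> L = L}"

definition EL :: "('k::field \<Rightarrow> complex) \<Rightarrow> ('s::ab_group_add \<Rightarrow> 's \<Rightarrow> 'k) \<Rightarrow> ('s \<times> 's) set \<Rightarrow> ('s \<times> 's \<Rightarrow> complex) set" where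
  "EL \<psi> \<eta> L = {f. \<forall>w \<zeta>. \<zeta> \<in> L \<longrightarrow> f (w + \<zeta>) = chi \<psi> \<eta> w \<zeta> * f w}"

definition inner_W :: "('s \<times> 's \<Rightarrow> complex) \<Rightarrow> ('s \<times> 's \<Rightarrow> complex) \<Rightarrow> complex" where
  "inner_W f h = (\<Sum>w\<in>UNIV. f w * cnj (h w))"

definition gamma :: "('k::field \<Rightarrow> complex) \<Rightarrow> ('s::ab_group_add \<Rightarrow> 's \<Rightarrow> 'k) \<Rightarrow> ('s \<times> 's) set \<Rightarrow> ('s \<times> 's) set
     \<Rightarrow> ('s \<times> 's \<Rightarrow> complex) \<Rightarrow> 's \<times> 's \<Rightarrow> complex" where
  "gamma \<psi> \<eta> L' L f w = complex_of_real (1 / sqrt (real (card L * card (L \<inter> L')))) *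
      (\<Sum>\<zeta>'\<in>L'. cnj (chi \<psi> \<eta> w \<zeta>') * f (w + \<zeta>'))"

definition SW :: "('k::field \<Rightarrow> complex) \<Rightarrow> ('s::ab_group_add \<Rightarrow> 's \<Rightarrow> 'k) \<Rightarrow> ('s \<times> 's) set \<Rightarrow> ('s \<times> 's) set \<Rightarrow> ('s \<times> 's) set \<Rightarrow> complex" where
  "SW \<psi> \<eta> L L' L'' = (\<Sum>\<zeta>\<in>L \<inter> {a + b | a b. a \<in> L' \<and> b \<in> L''}.
      (let p = (SOME p. fst p \<in> L' \<and> snd p \<in> L'' \<and> fst p + snd p = \<zeta>) in chi \<psi> \<eta> (fst p) (snd p)))"

definition mu :: "('k::field \<Rightarrow> complex) \<Rightarrow> ('s::ab_group_add \<Rightarrow> 's \<Rightarrow> 'k) \<Rightarrow> ('s \<times> 's) set \<Rightarrow> ('s \<times> 's) set \<Rightarrow> ('s \<times> 's) set \<Rightarrow> complex" where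
  "mu \<psi> \<eta> L'' L' L = complex_of_real (sqrt (real (card (L'' \<inter> L')) / real (card (L \<inter> L'') * card (L' \<inter> L) * card L)))
      * SW \<psi> \<eta> L L' L''"

(* 2x2 matrices over A, as quadruples (a,b,c,d) = [[a,b],[c,d]] *)
type_synonym 'a mat2 = "'a \<times> 'a \<times> 'a \<times> 'a"

definition SLstar :: "('a::ring_1 \<Rightarrow> 'a) \<Rightarrow> 'a mat2 set" where
  "SLstar star = {(a, b, c, d). a * star b = b * star a \<and> c * star d = d * star c \<and>
      star a * c = star c * a \<and> star b * d = star d * b \<and>
      a * star d - b * star c = 1 \<and> star a * d - star c * b = 1}"

definition mat_mult :: "'a::ring_1 mat2 \<Rightarrow> 'a mat2 \<Rightarrow> 'a mat2" where
  "mat_mult g h = (case g of (a, b, c, d) \<Rightarrow> case h of (a', b', c', d') \<Rightarrow>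
      (a * a' + b * c', a * b' + b * d', c * a' + d * c', c * b' + d * d'))"

definition mat_one :: "'a::ring_1 mat2" where
  "mat_one = (1, 0, 0, 1)"

definition mat_inv :: "'a::ring_1 mat2 \<Rightarrow> 'a mat2" where
  "mat_inv g = (THE h. mat_mult g h = mat_one \<and> mat_mult h g = mat_one)"

definition col_act :: "('a::ring_1 \<Rightarrow> 's::ab_group_add \<Rightarrow> 's) \<Rightarrow> 'a mat2 \<Rightarrow> 's \<times> 's \<Rightarrow> 's \<times> 's" where
  "col_act smul g w = (case g of (a, b, c, d) \<Rightarrow>
      (smul a (fst w) + smul b (snd w), smul c (fst w) + smul d (snd w)))"

(* row vector times matrix, S being a right A-module via s.x = x^* s *)
definition row_mult :: "('a::ring_1 \<Rightarrow> 'a) \<Rightarrow> ('a \<Rightarrow> 's::ab_group_add \<Rightarrow> 's) \<Rightarrow> 's \<times> 's \<Rightarrow> 'a mat2 \<Rightarrow> 's \<times> 's" where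
  "row_mult star smul w g = (case g of (a, b, c, d) \<Rightarrow>
      (smul (star a) (fst w) + smul (star c) (snd w), smul (star b) (fst w) + smul (star d) (snd w)))"

definition row_act :: "('a::ring_1 \<Rightarrow> 'a) \<Rightarrow> ('a \<Rightarrow> 's::ab_group_add \<Rightarrow> 's) \<Rightarrow> 'a mat2 \<Rightarrow> 's \<times> 's \<Rightarrow> 's \<times> 's" where
  "row_act star smul g w = row_mult star smul w (mat_inv g)"

definition tau :: "('a::ring_1 mat2 \<Rightarrow> 's \<times> 's \<Rightarrow> 's \<times> 's) \<Rightarrow> 'a mat2 \<Rightarrow> ('s \<times> 's \<Rightarrow> complex) \<Rightarrow> 's \<times> 's \<Rightarrow> complex" where
  "tau act g f w = f (act (mat_inv g) w)"

end

theory Submission imports Defs begin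

locale ctx =
  fixes alg :: "'k::field \<Rightarrow> 'a::ring_1" and star :: "'a \<Rightarrow> 'a"
    and smul :: "'a \<Rightarrow> 's::ab_group_add \<Rightarrow> 's" and \<eta> :: "'s \<Rightarrow> 's \<Rightarrow> 'k"
    and \<psi> :: "'k \<Rightarrow> complex"
  assumes finS: "finite (UNIV :: 's set)" and oddc: "odd CHAR('k)"
    and kalg: "k_algebra_with_involution alg star"
    and sdm: "self_dual_module alg star smul \<eta>"
    and psi: "nontrivial_character \<psi>"
begin

abbreviation "B \<equiv> symB \<eta>"
abbreviation "X \<equiv> chi \<psi> \<eta>"
abbreviation "Lag \<equiv> lagrangians star smul \<eta>"

lemma smul_add: "smul a (s + t) = smul a s + smul a t" using sdm unfolding self_dual_module_def by auto
lemma smul_radd: "smul (a + b) s = smul a s + smul b s" using sdm unfolding self_dual_module_def by auto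
lemma smul_mult: "smul (a * b) s = smul a (smul b s)" using sdm unfolding self_dual_module_def by auto
lemma smul_one[simp]: "smul 1 s = s" using sdm unfolding self_dual_module_def by auto
lemma eta_ladd: "\<eta> (s + s') t = \<eta> s t + \<eta> s' t" using sdm unfolding self_dual_module_def by auto
lemma eta_radd: "\<eta> s (t + t') = \<eta> s t + \<eta> s t'" using sdm unfolding self_dual_module_def by auto
lemma eta_lsc: "\<eta> (smul (alg c) s) t = c * \<eta> s t" using sdm unfolding self_dual_module_def by auto
lemma eta_rsc: "\<eta> s (smul (alg c) t) = c * \<eta> s t" using sdm unfolding self_dual_module_def by auto
lemma eta_sym: "\<eta> s t = \<eta> t s" using sdm unfolding self_dual_module_def by auto
lemma eta_nondeg: "(\<And>t. \<eta> s t = 0) \<Longrightarrow> s = 0" using sdm unfolding self_dual_module_def by auto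
lemma eta_bal: "\<eta> (smul (star a) s) t = \<eta> s (smul a t)" using sdm unfolding self_dual_module_def by auto

lemma star_add: "star (a + b) = star a + star b" using kalg unfolding k_algebra_with_involution_def by auto
lemma star_mult: "star (a * b) = star b * star a" using kalg unfolding k_algebra_with_involution_def by auto
lemma star_star[simp]: "star (star a) = a" using kalg unfolding k_algebra_with_involution_def by auto
lemma star_alg[simp]: "star (alg x) = alg x" using kalg unfolding k_algebra_with_involution_def by auto
lemma alg_one: "alg 1 = 1" using kalg unfolding k_algebra_with_involution_def by auto

lemma psi_add: "\<psi> (x + y) = \<psi> x * \<psi> y" using psi unfolding nontrivial_character_def by auto
lemma psi_norm: "cmod (\<psi> x) = 1" using psi unfolding nontrivial_character_def by auto
lemma psi_nontriv: "\<exists>x. \<psi> x \<noteq> 1" using psi unfolding nontrivial_character_def by auto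

lemma star_zero[simp]: "star 0 = 0" using star_add[of 0 0] by simp
lemma star_one[simp]: "star 1 = 1" using star_alg[of 1] alg_one by simp
lemma star_neg[simp]: "star (- a) = - star a"
proof - have "star a + star (- a) = 0" using star_add[of a "-a"] by simp
  thus ?thesis by (simp add: add_eq_0_iff) qed
lemma star_diff: "star (a - b) = star a - star b" using star_add[of a "-b"] by simp

lemma smul_zero[simp]: "smul a 0 = 0" using smul_add[of a 0 0] by simp
lemma smul_rzero[simp]: "smul 0 s = 0" using smul_radd[of 0 0 s] by simp
lemma smul_neg: "smul a (- s) = - smul a s"
proof - have "smul a s + smul a (- s) = 0" using smul_add[of a s "-s"] by simp
  thus ?thesis by (simp add: add_eq_0_iff) qed
lemma smul_rneg: "smul (- a) s = - smul a s"
proof - have "smul a s + smul (- a) s = 0" using smul_radd[of a "-a" s] by simp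
  thus ?thesis by (simp add: add_eq_0_iff) qed
lemma smul_diff: "smul a (s - t) = smul a s - smul a t" using smul_add[of a s "-t"] smul_neg by simp
lemma smul_rdiff: "smul (a - b) s = smul a s - smul b s" using smul_radd[of a "-b" s] smul_rneg by simp

lemma eta_lzero[simp]: "\<eta> 0 t = 0" proof - have "\<eta> 0 t + \<eta> 0 t = \<eta> 0 t + 0" using eta_ladd[of 0 0 t] by simp thus ?thesis by (rule add_left_imp_eq) qed
lemma eta_rzero[simp]: "\<eta> s 0 = 0" proof - have "\<eta> s 0 + \<eta> s 0 = \<eta> s 0 + 0" using eta_radd[of s 0 0] by simp thus ?thesis by (rule add_left_imp_eq) qed
lemma eta_lneg: "\<eta> (- s) t = - \<eta> s t"
proof - have "\<eta> s t + \<eta> (- s) t = 0" using eta_ladd[of s "-s" t] by simp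
  thus ?thesis by (simp add: add_eq_0_iff) qed
lemma eta_rneg: "\<eta> s (- t) = - \<eta> s t"
proof - have "\<eta> s t + \<eta> s (- t) = 0" using eta_radd[of s t "-t"] by simp
  thus ?thesis by (simp add: add_eq_0_iff) qed
lemma eta_ldiff: "\<eta> (s - s') t = \<eta> s t - \<eta> s' t" using eta_ladd[of s "-s'" t] eta_lneg by simp
lemma eta_rdiff: "\<eta> s (t - t') = \<eta> s t - \<eta> s t'" using eta_radd[of s t "-t'"] eta_rneg by simp
lemma eta_smul: "\<eta> (smul a s) t = \<eta> s (smul (star a) t)" using eta_bal[of "star a" s t] by simp

lemma psi_zero: "\<psi> 0 = 1"
proof -
  have "\<psi> 0 = \<psi> 0 * \<psi> 0" using psi_add[of 0 0] by simp
  moreover have "\<psi> 0 \<noteq> 0" using psi_norm[of 0] by auto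
  ultimately show ?thesis by (metis mult_cancel_left1)
qed
lemma psi_neg: "\<psi> (- x) = cnj (\<psi> x)"
proof -
  have "\<psi> x * \<psi> (-x) = 1" using psi_add[of x "-x"] psi_zero by simp
  moreover have "\<psi> x * cnj (\<psi> x) = 1" using psi_norm[of x]
    by (metis complex_norm_square mult.commute of_real_1 power_one)
  moreover have "\<psi> x \<noteq> 0" using psi_norm[of x] by auto
  ultimately show ?thesis by (metis mult_left_cancel)
qed


definition scal :: "'k \<Rightarrow> 's \<times> 's \<Rightarrow> 's \<times> 's" where
  "scal c z = (smul (alg c) (fst z), smul (alg c) (snd z))"

definition subsp :: "('s \<times> 's) set \<Rightarrow> bool" where
  "subsp M \<longleftrightarrow> 0 \<in> M \<and> (\<forall>x\<in>M. \<forall>y\<in>M. x + y \<in> M) \<and> (\<forall>x\<in>M. - x \<in> M) \<and> (\<forall>x\<in>M. \<forall>c. scal c x \<in> M)"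

lemma finW: "finite (M :: ('s \<times> 's) set)"
proof -
  have "finite (UNIV :: ('s \<times> 's) set)" using finS by (simp add: finite_Prod_UNIV)
  thus ?thesis by (rule finite_subset[rotated]) simp
qed

lemma B_ladd: "B (u + u') v = B u v + B u' v" by (simp add: symB_def eta_ladd)
lemma B_radd: "B u (v + v') = B u v + B u v'" by (simp add: symB_def eta_radd)
lemma B_anti: "B u v = - B v u" by (simp add: symB_def eta_sym)
lemma B_self[simp]: "B u u = 0" by (simp add: symB_def eta_sym)
lemma B_lneg: "B (- u) v = - B u v" by (simp add: symB_def eta_lneg)
lemma B_rneg: "B u (- v) = - B u v" by (simp add: symB_def eta_rneg)
lemma B_lzero[simp]: "B 0 v = 0" by (simp add: symB_def)
lemma B_rzero[simp]: "B u 0 = 0" by (simp add: symB_def)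
lemma B_rscal: "B u (scal c v) = c * B u v" by (simp add: symB_def scal_def eta_rsc algebra_simps)
lemma B_nondeg: assumes "\<And>v. B u v = 0" shows "u = 0"
proof -
  have a: "\<eta> (fst u) t = 0" for t using assms[of "(0, t)"] by (simp add: symB_def)
  have b: "\<eta> (snd u) t = 0" for t using assms[of "(t, 0)"] by (simp add: symB_def)
  show ?thesis using eta_nondeg[OF a] eta_nondeg[OF b] by (simp add: prod_eq_iff)
qed

lemma X_def': "X u v = \<psi> (B u v)" by (simp add: chi_def)
lemma X_ladd: "X (u + u') v = X u v * X u' v" by (simp add: chi_def B_ladd psi_add)
lemma X_radd: "X u (v + v') = X u v * X u v'" by (simp add: chi_def B_radd psi_add)
lemma X_cnj: "cnj (X u v) = X v u" by (simp add: chi_def psi_neg[symmetric] B_anti[of v u])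
lemma X_norm: "cmod (X u v) = 1" by (simp add: chi_def psi_norm)
lemma X_nz: "X u v \<noteq> 0" using X_norm[of u v] by auto
lemma X_cnj_mult: "cnj (X u v) * X u v = 1"
  using X_norm[of u v] by (metis complex_norm_square mult.commute of_real_1 power_one)
lemma X_mult_cnj: "X u v * cnj (X u v) = 1" using X_cnj_mult by (simp add: mult.commute)
lemma X_B0: "B u v = 0 \<Longrightarrow> X u v = 1" by (simp add: chi_def psi_zero)
lemma X_self[simp]: "X u u = 1" by (simp add: X_B0)
lemma X_lzero[simp]: "X 0 v = 1" by (simp add: X_B0)
lemma X_rzero[simp]: "X u 0 = 1" by (simp add: X_B0)
lemma X_lneg: "X (- u) v = cnj (X u v)" by (simp add: chi_def B_lneg psi_neg)
lemma X_rneg: "X u (- v) = cnj (X u v)" by (simp add: chi_def B_rneg psi_neg)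

lemma Lag_props:
  assumes "L \<in> Lag"
  shows "0 \<in> L" "\<And>x y. x \<in> L \<Longrightarrow> y \<in> L \<Longrightarrow> x + y \<in> L" "\<And>x. x \<in> L \<Longrightarrow> - x \<in> L"
    "\<And>x c. x \<in> L \<Longrightarrow> scal c x \<in> L" "\<And>x y. x \<in> L \<Longrightarrow> y \<in> L \<Longrightarrow> B x y = 0"
    "\<And>w. (\<And>z. z \<in> L \<Longrightarrow> B w z = 0) \<Longrightarrow> w \<in> L"
proof -
  have L: "0 \<in> L" "\<forall>x\<in>L. \<forall>y\<in>L. x + y \<in> L" "\<forall>x\<in>L. - x \<in> L" "\<forall>x\<in>L. \<forall>a. rmul star smul x a \<in> L"
    "perp \<eta> L = L" using assms unfolding lagrangians_def by auto
  show "0 \<in> L" by fact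
  show "\<And>x y. x \<in> L \<Longrightarrow> y \<in> L \<Longrightarrow> x + y \<in> L" using L by auto
  show "\<And>x. x \<in> L \<Longrightarrow> - x \<in> L" using L by auto
  show "\<And>x c. x \<in> L \<Longrightarrow> scal c x \<in> L" using L(4) by (metis rmul_def scal_def star_alg)
  show "\<And>x y. x \<in> L \<Longrightarrow> y \<in> L \<Longrightarrow> B x y = 0" using L(5) unfolding perp_def by auto
  show "\<And>w. (\<And>z. z \<in> L \<Longrightarrow> B w z = 0) \<Longrightarrow> w \<in> L" using L(5) unfolding perp_def by auto
qed

lemma Lag_subsp: "L \<in> Lag \<Longrightarrow> subsp L" using Lag_props unfolding subsp_def by blast
lemma Lag_X: "L \<in> Lag \<Longrightarrow> x \<in> L \<Longrightarrow> y \<in> L \<Longrightarrow> X x y = 1" using Lag_props(5) X_B0 by blast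

lemma shift_sum:
  fixes M :: "('s \<times> 's) set"
  assumes "\<forall>x\<in>M. \<forall>y\<in>M. x + y \<in> M" "\<forall>x\<in>M. - x \<in> M" "z \<in> M"
  shows "(\<Sum>m\<in>M. F (m + z)) = (\<Sum>m\<in>M. F m)"
proof (rule sum.reindex_bij_witness[of M "\<lambda>m. m - z" "\<lambda>m. m + z"])
  fix m assume "m \<in> M"
  thus "m - z \<in> M" using assms by (metis diff_conv_add_uminus)
qed (use assms in auto)

lemma scal_hit:
  assumes "B w z \<noteq> 0" shows "B w (scal (x / B w z) z) = x"
  using assms by (simp add: B_rscal)

lemma charsum:
  assumes "subsp M"
  shows "(\<Sum>m\<in>M. X w m) = (if (\<forall>z\<in>M. B w z = 0) then of_nat (card M) else 0)"
proof (cases "\<forall>z\<in>M. B w z = 0")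
  case True
  hence "(\<Sum>m\<in>M. X w m) = (\<Sum>m\<in>M. 1)" by (intro sum.cong) (auto simp: X_B0)
  thus ?thesis using True by simp
next
  case False
  then obtain z where z: "z \<in> M" "B w z \<noteq> 0" by auto
  obtain x where x: "\<psi> x \<noteq> 1" using psi_nontriv by auto
  define z' where "z' = scal (x / B w z) z"
  have z'M: "z' \<in> M" using assms z unfolding subsp_def z'_def by auto
  have Xz': "X w z' \<noteq> 1" using x scal_hit[OF z(2)] by (simp add: z'_def chi_def)
  have "(\<Sum>m\<in>M. X w (m + z')) = (\<Sum>m\<in>M. X w m)"
    by (rule shift_sum) (use assms z'M in \<open>auto simp: subsp_def\<close>)
  moreover have "(\<Sum>m\<in>M. X w (m + z')) = X w z' * (\<Sum>m\<in>M. X w m)"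
    by (simp add: X_radd sum_distrib_left mult.commute)
  ultimately have "(X w z' - 1) * (\<Sum>m\<in>M. X w m) = 0" by (simp add: algebra_simps)
  thus ?thesis using Xz' False by auto
qed

lemma card_perp:
  assumes "subsp M"
  shows "card (perp \<eta> M) * card M = card (UNIV :: ('s \<times> 's) set)"
proof -
  have univ: "subsp UNIV" unfolding subsp_def by auto
  have "(\<Sum>w\<in>UNIV. \<Sum>m\<in>M. X w m) = (\<Sum>w\<in>UNIV. if w \<in> perp \<eta> M then of_nat (card M) else 0)"
    by (intro sum.cong refl) (simp add: charsum[OF assms] perp_def)
  also have "\<dots> = (\<Sum>w\<in>perp \<eta> M. of_nat (card M))"
    using sum.inter_filter[of UNIV "\<lambda>_. of_nat (card M) :: complex" "\<lambda>w. w \<in> perp \<eta> M"] finW by simp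
  also have "\<dots> = of_nat (card (perp \<eta> M) * card M)" by simp
  finally have 1: "(\<Sum>w\<in>UNIV. \<Sum>m\<in>M. X w m) = of_nat (card (perp \<eta> M) * card M)" .
  have "(\<Sum>w\<in>UNIV. \<Sum>m\<in>M. X w m) = (\<Sum>m\<in>M. \<Sum>w\<in>UNIV. X w m)" by (rule sum.swap)
  also have "\<dots> = (\<Sum>m\<in>M. cnj (\<Sum>w\<in>UNIV. X m w))"
    by (intro sum.cong refl) (simp add: X_cnj)
  also have "\<dots> = (\<Sum>m\<in>M. if m = 0 then of_nat (card (UNIV :: ('s \<times> 's) set)) else 0)"
  proof (intro sum.cong refl)
    fix m assume "m \<in> M"
    have "(\<forall>z\<in>UNIV. B m z = 0) \<longleftrightarrow> m = 0" using B_nondeg[of m] by auto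
    thus "cnj (\<Sum>w\<in>UNIV. X m w) = (if m = 0 then of_nat (card (UNIV :: ('s \<times> 's) set)) else 0)"
      by (simp add: charsum[OF univ])
  qed
  also have "\<dots> = of_nat (card (UNIV :: ('s \<times> 's) set))"
    using assms by (simp add: sum.delta finW subsp_def)
  finally have "(of_nat (card (perp \<eta> M) * card M) :: complex) = of_nat (card (UNIV :: ('s \<times> 's) set))"
    using 1 by simp
  thus ?thesis by (simp only: of_nat_eq_iff)
qed


lemma sq_inj_nat: "(a::nat) * a = b * b \<Longrightarrow> a = b"
proof -
  assume h: "a * a = b * b"
  consider "a < b" | "a = b" | "b < a" by linarith
  thus ?thesis
  proof cases
    case 1 hence "a * a < b * b" by (simp add: mult_strict_mono)
    thus ?thesis using h by simp
  next
    case 3 hence "b * b < a * a" by (simp add: mult_strict_mono)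
    thus ?thesis using h by simp
  qed
qed

lemma card_Lag_sq: "L \<in> Lag \<Longrightarrow> card L * card L = card (UNIV :: ('s \<times> 's) set)"
proof -
  assume L: "L \<in> Lag"
  hence "perp \<eta> L = L" unfolding lagrangians_def by blast
  thus ?thesis using card_perp[OF Lag_subsp[OF L]] by simp
qed

lemma card_Lag_eq: "L \<in> Lag \<Longrightarrow> L' \<in> Lag \<Longrightarrow> card L = card L'"
  using card_Lag_sq[of L] card_Lag_sq[of L'] sq_inj_nat by metis

lemma card_pos: "0 \<in> (M::(('s \<times> 's) set)) \<Longrightarrow> card M > 0" using finW[of M] by (auto simp: card_gt_0_iff)

lemma card_Lag_pos: "L \<in> Lag \<Longrightarrow> L' \<in> Lag \<Longrightarrow> card (L \<inter> L') > 0"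
  using Lag_props(1) card_pos by simp

definition sumset :: "('s \<times> 's) set \<Rightarrow> ('s \<times> 's) set \<Rightarrow> ('s \<times> 's) set" where
  "sumset M N = {a + b | a b. a \<in> M \<and> b \<in> N}"

definition subgrp :: "('s \<times> 's) set \<Rightarrow> bool" where
  "subgrp M \<longleftrightarrow> 0 \<in> M \<and> (\<forall>x\<in>M. \<forall>y\<in>M. x + y \<in> M) \<and> (\<forall>x\<in>M. - x \<in> M)"

lemma Lag_subgrp: "L \<in> Lag \<Longrightarrow> subgrp L" using Lag_props unfolding subgrp_def by blast

lemma subgrp_diff: "subgrp M \<Longrightarrow> x \<in> M \<Longrightarrow> y \<in> M \<Longrightarrow> x - y \<in> M"
  unfolding subgrp_def by (metis diff_conv_add_uminus)

lemma fiber_card: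
  assumes M: "subgrp M" and N: "subgrp N" and m0: "m0 \<in> M" and n0: "n0 \<in> N"
  shows "card {p \<in> M \<times> N. fst p + snd p = m0 + n0} = card (M \<inter> N)"
proof -
  have eq: "{p \<in> M \<times> N. fst p + snd p = m0 + n0} = (\<lambda>x. (m0 + x, n0 - x)) ` (M \<inter> N)"
  proof
    show "(\<lambda>x. (m0 + x, n0 - x)) ` (M \<inter> N) \<subseteq> {p \<in> M \<times> N. fst p + snd p = m0 + n0}"
    proof (rule image_subsetI)
      fix x assume x: "x \<in> M \<inter> N"
      have "m0 + x \<in> M" using M m0 x unfolding subgrp_def by blast
      moreover have "n0 - x \<in> N" using subgrp_diff[OF N n0] x by blast
      ultimately show "(m0 + x, n0 - x) \<in> {p \<in> M \<times> N. fst p + snd p = m0 + n0}" by simp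
    qed
    show "{p \<in> M \<times> N. fst p + snd p = m0 + n0} \<subseteq> (\<lambda>x. (m0 + x, n0 - x)) ` (M \<inter> N)"
    proof clarify
      fix a b assume ab: "a \<in> M" "b \<in> N" "fst (a, b) + snd (a, b) = m0 + n0"
      have x1: "a - m0 \<in> M" using subgrp_diff[OF M ab(1) m0] .
      have "a - m0 = n0 - b" using ab(3) by (simp add: algebra_simps)
      hence x2: "a - m0 \<in> N" using subgrp_diff[OF N n0 ab(2)] by simp
      show "(a, b) \<in> (\<lambda>x. (m0 + x, n0 - x)) ` (M \<inter> N)"
      proof (rule image_eqI[of _ _ "a - m0"])
        show "(a, b) = (m0 + (a - m0), n0 - (a - m0))" using \<open>a - m0 = n0 - b\<close> by (simp add: algebra_simps)
        show "a - m0 \<in> M \<inter> N" using x1 x2 by blast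
      qed
    qed
  qed
  have "inj_on (\<lambda>x. (m0 + x, n0 - x)) (M \<inter> N)" by (auto intro: inj_onI)
  thus ?thesis unfolding eq by (simp add: card_image)
qed

lemma sumset_image: "sumset M N = (\<lambda>p. fst p + snd p) ` (M \<times> N)"
  unfolding sumset_def by force

lemma card_sumset:
  assumes M: "subgrp M" and N: "subgrp N"
  shows "card (sumset M N) * card (M \<inter> N) = card M * card N"
proof -
  have "card M * card N = card (M \<times> N)" by (simp add: card_cartesian_product)
  also have "\<dots> = (\<Sum>p\<in>M \<times> N. (1::nat))" by simp
  also have "\<dots> = (\<Sum>u\<in>sumset M N. \<Sum>p\<in>{p \<in> M \<times> N. fst p + snd p = u}. 1)"
    unfolding sumset_image by (rule sum.image_gen) (simp add: finW)
  also have "\<dots> = (\<Sum>u\<in>sumset M N. card (M \<inter> N))"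
  proof (intro sum.cong refl)
    fix u assume "u \<in> sumset M N"
    then obtain a b where "a \<in> M" "b \<in> N" "u = a + b" unfolding sumset_def by auto
    thus "(\<Sum>p\<in>{p \<in> M \<times> N. fst p + snd p = u}. 1) = card (M \<inter> N)"
      using fiber_card[OF M N] by simp
  qed
  also have "\<dots> = card (sumset M N) * card (M \<inter> N)" by simp
  finally show ?thesis by simp
qed

lemma perp_int_Lag:
  assumes L: "L \<in> Lag" and L2: "L'' \<in> Lag"
  shows "perp \<eta> (L \<inter> L'') = sumset L L''"
proof -
  have sub: "sumset L L'' \<subseteq> perp \<eta> (L \<inter> L'')"
  proof
    fix u assume "u \<in> sumset L L''"
    then obtain a b where ab: "a \<in> L" "b \<in> L''" "u = a + b" unfolding sumset_def by auto
    have "\<forall>z\<in>L \<inter> L''. B u z = 0"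
    proof
      fix z assume z: "z \<in> L \<inter> L''"
      have "B a z = 0" using Lag_props(5)[OF L ab(1)] z by blast
      moreover have "B b z = 0" using Lag_props(5)[OF L2 ab(2)] z by blast
      ultimately show "B u z = 0" unfolding ab(3) B_ladd by simp
    qed
    thus "u \<in> perp \<eta> (L \<inter> L'')" unfolding perp_def by simp
  qed
  have ss: "subsp (L \<inter> L'')" using Lag_subsp[OF L] Lag_subsp[OF L2] unfolding subsp_def by auto
  have "card (perp \<eta> (L \<inter> L'')) * card (L \<inter> L'') = card L * card L''"
    using card_perp[OF ss] card_Lag_sq[OF L] card_Lag_eq[OF L L2] by simp
  also have "\<dots> = card (sumset L L'') * card (L \<inter> L'')"
    using card_sumset[OF Lag_subgrp[OF L] Lag_subgrp[OF L2]] by simp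
  finally have "card (perp \<eta> (L \<inter> L'')) = card (sumset L L'')"
    using card_Lag_pos[OF L L2] by simp
  thus ?thesis using card_subset_eq[OF finW sub] by simp
qed


lemma two_ne: "(2::'k) \<noteq> 0"
proof
  assume "(2::'k) = 0"
  hence "(of_nat 2 :: 'k) = 0" by simp
  hence "CHAR('k) dvd 2" by (simp only: of_nat_eq_0_iff_char_dvd)
  hence d: "CHAR('k) dvd 2" .
  have le: "CHAR('k) \<le> 2" using dvd_imp_le[OF d] by simp
  have "CHAR('k) \<noteq> 0"
  proof
    assume "CHAR('k) = 0" with d show False by simp
  qed
  with le have "CHAR('k) = 1" using oddc by presburger
  hence "(of_nat 1 :: 'k) = 0" by (simp only: of_nat_eq_0_iff_char_dvd) simp
  thus False by simp
qed

definition rho :: "'s \<times> 's \<Rightarrow> ('s \<times> 's \<Rightarrow> complex) \<Rightarrow> 's \<times> 's \<Rightarrow> complex" where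
  "rho u F = (\<lambda>w. cnj (X w u) * F (w + u))"

lemma rho_comp: "rho u (rho v F) w = cnj (X u v) * rho (u + v) F w"
  by (simp add: rho_def X_ladd X_radd add.assoc mult_ac)

lemma rho_lin: "rho u (\<lambda>w. c * F w) = (\<lambda>w. c * rho u F w)"
  by (simp add: rho_def fun_eq_iff mult_ac)

lemma EL_fix: assumes "f \<in> EL \<psi> \<eta> L" "l \<in> L" shows "rho l f = f"
proof
  fix w
  have "f (w + l) = X w l * f w" using assms unfolding EL_def by blast
  thus "rho l f w = f w" by (simp add: rho_def mult.assoc[symmetric] X_cnj_mult)
qed

lemma X_indep:
  assumes L': "L' \<in> Lag" and L'': "L'' \<in> Lag" and a: "a \<in> L'" "a' \<in> L'" and b: "b \<in> L''" "b' \<in> L''"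
    and eq: "a + b = a' + b'"
  shows "X a b = X a' b'"
proof -
  define x where "x = a - a'"
  have "a - a' = (a + b) - (a' + b)" by (simp add: algebra_simps)
  also have "\<dots> = (a' + b') - (a' + b)" using eq by simp
  also have "\<dots> = b' - b" by (simp add: algebra_simps)
  finally have xb: "x = b' - b" unfolding x_def .
  have x1: "x \<in> L'" unfolding x_def using subgrp_diff[OF Lag_subgrp[OF L'] a] .
  have x2: "x \<in> L''" unfolding xb using subgrp_diff[OF Lag_subgrp[OF L''] b(2) b(1)] .
  have ax: "a = a' + x" unfolding x_def by simp
  have bx: "b = b' + - x" using xb by simp
  have "X a b = X (a' + x) (b' + - x)" using ax bx by simp
  also have "\<dots> = X a' b' * X a' (- x) * (X x b' * X x (- x))"
    by (simp only: X_ladd X_radd) (simp add: mult_ac)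
  also have "\<dots> = X a' b'" using Lag_X[OF L' a(2) x1] Lag_X[OF L'' x2 b(2)]
    by (simp add: X_rneg)
  finally show ?thesis .
qed

lemma const_eq:
  fixes n p q r :: real
  assumes "n > 0" "p > 0" "q > 0" "r > 0"
  shows "1 / sqrt (n * q) * (1 / sqrt (n * p)) * q / r = sqrt (q / (r * p * n)) * (1 / sqrt (n * r))"
proof -
  have sq: "q = sqrt q * sqrt q" "n = sqrt n * sqrt n" using assms by simp_all
  have "1 / sqrt (n * q) * (1 / sqrt (n * p)) * q / r = sqrt q / (n * sqrt p * r)"
    using assms by (subst (3) sq(1)) (simp add: real_sqrt_mult field_simps)
  also have "\<dots> = sqrt (q / (r * p * n)) * (1 / sqrt (n * r))"
    using assms by (subst (2) sq(2)) (simp add: real_sqrt_mult real_sqrt_divide field_simps)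
  finally show ?thesis .
qed


context
  fixes L L' L'' f
  assumes L: "L \<in> Lag" and L': "L' \<in> Lag" and L'': "L'' \<in> Lag" and f: "f \<in> EL \<psi> \<eta> L"
begin

definition "Q a w = (\<Sum>b\<in>L''. rho b (rho a f) w)"
definition "Y w = (\<Sum>b\<in>L''. rho b f w)"

lemma Yshift: assumes "b0 \<in> L''" shows "(\<Sum>b\<in>L''. rho b (rho b0 G) w) = (\<Sum>b\<in>L''. rho b G w)"
proof -
  have "(\<Sum>b\<in>L''. rho b (rho b0 G) w) = (\<Sum>b\<in>L''. rho (b + b0) G w)"
    by (intro sum.cong refl) (simp add: rho_comp Lag_X[OF L'' _ assms])
  also have "\<dots> = (\<Sum>b\<in>L''. rho b G w)"
    by (rule shift_sum[where F = "\<lambda>b. rho b G w"]) (use Lag_props[OF L''] assms in auto)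
  finally show ?thesis .
qed

lemma Q_good: assumes b0: "b0 \<in> L''" and l: "l \<in> L" shows "Q (b0 + l) w = X b0 l * Y w"
proof -
  have "rho (b0 + l) f = (\<lambda>w. X b0 l * rho b0 f w)"
  proof
    fix w
    have "rho b0 (rho l f) w = cnj (X b0 l) * rho (b0 + l) f w" by (rule rho_comp)
    hence "rho b0 f w = cnj (X b0 l) * rho (b0 + l) f w" using EL_fix[OF f l] by simp
    hence "X b0 l * rho b0 f w = (X b0 l * cnj (X b0 l)) * rho (b0 + l) f w" by (simp add: mult.assoc)
    thus "rho (b0 + l) f w = X b0 l * rho b0 f w" by (simp add: X_mult_cnj)
  qed
  hence "Q (b0 + l) w = (\<Sum>b\<in>L''. X b0 l * rho b (rho b0 f) w)"
    unfolding Q_def by (simp add: rho_lin)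
  also have "\<dots> = X b0 l * (\<Sum>b\<in>L''. rho b (rho b0 f) w)" by (simp add: sum_distrib_left)
  also have "\<dots> = X b0 l * Y w" unfolding Y_def using Yshift[OF b0] by simp
  finally show ?thesis .
qed

lemma Q_zero: assumes m: "m \<in> L" "m \<in> L''" and ne: "X a m * X a m \<noteq> 1" shows "Q a w = 0"
proof -
  define c where "c = X m a * X m a"
  have rf: "rho a f = (\<lambda>w. c * rho m (rho a f) w)"
  proof
    fix w
    have 1: "rho a f w = cnj (X a m) * rho (a + m) f w"
      using rho_comp[of a m f w] EL_fix[OF f m(1)] by simp
    have "rho m (rho a f) w = cnj (X m a) * rho (m + a) f w" by (rule rho_comp)
    hence "X m a * rho m (rho a f) w = (X m a * cnj (X m a)) * rho (a + m) f w"
      by (simp add: mult.assoc add.commute)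
    hence 2: "rho (a + m) f w = X m a * rho m (rho a f) w" by (simp add: X_mult_cnj)
    show "rho a f w = c * rho m (rho a f) w" unfolding c_def 1 2 by (simp add: X_cnj mult_ac)
  qed
  have "Q a w = (\<Sum>b\<in>L''. c * rho b (rho m (rho a f)) w)"
    unfolding Q_def by (subst rf) (simp add: rho_lin)
  also have "\<dots> = c * (\<Sum>b\<in>L''. rho b (rho m (rho a f)) w)" by (simp add: sum_distrib_left)
  also have "\<dots> = c * Q a w" unfolding Q_def using Yshift[OF m(2)] by simp
  finally have "(1 - c) * Q a w = 0" by (simp add: algebra_simps)
  moreover have "c \<noteq> 1" unfolding c_def using ne
    by (metis X_cnj complex_cnj_mult complex_cnj_one)
  ultimately show ?thesis by simp
qed

lemma dichotomy: "a \<in> sumset L'' L \<or> (\<exists>m. m \<in> L \<and> m \<in> L'' \<and> X a m * X a m \<noteq> 1)"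
proof (cases "a \<in> sumset L'' L")
  case False
  hence "a \<notin> perp \<eta> (L'' \<inter> L)" using perp_int_Lag[OF L'' L] by simp
  then obtain z where z: "z \<in> L'' \<inter> L" "B a z \<noteq> 0" unfolding perp_def by auto
  obtain x where x: "\<psi> x \<noteq> 1" using psi_nontriv by auto
  define m where "m = scal (x / (2 * B a z)) z"
  have mL: "m \<in> L" "m \<in> L''" unfolding m_def using Lag_props(4)[OF L] Lag_props(4)[OF L''] z by auto
  have "B a m = x / 2" unfolding m_def B_rscal using z(2) two_ne by (simp add: field_simps)
  hence "X a m * X a m = \<psi> x" unfolding X_def' psi_add[symmetric] using two_ne by (simp add: field_simps)
  hence "m \<in> L \<and> m \<in> L'' \<and> X a m * X a m \<noteq> 1" using mL x by simp
  thus ?thesis by blast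
qed simp

lemma Qsum_restrict: "(\<Sum>a\<in>L'. Q a w) = (\<Sum>a\<in>L' \<inter> sumset L'' L. Q a w)"
proof -
  have "(\<Sum>a\<in>L' \<inter> sumset L'' L. Q a w) = (\<Sum>a\<in>L'. if a \<in> sumset L'' L then Q a w else 0)"
    by (rule sum.inter_restrict) (rule finW)
  also have "\<dots> = (\<Sum>a\<in>L'. Q a w)"
  proof (intro sum.cong refl)
    fix a assume "a \<in> L'"
    show "(if a \<in> sumset L'' L then Q a w else 0) = Q a w"
    proof (cases "a \<in> sumset L'' L")
      case False
      then obtain m where "m \<in> L" "m \<in> L''" "X a m * X a m \<noteq> 1" using dichotomy[of a] by blast
      hence "Q a w = 0" by (rule Q_zero)
      thus ?thesis using False by simp
    qed simp
  qed
  finally show ?thesis by simp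
qed

definition "PP = {p \<in> L'' \<times> L. fst p + snd p \<in> L'}"

lemma finPairs: "finite {p \<in> (A::('s \<times> 's) set) \<times> (A'::('s \<times> 's) set). P p}"
  by (rule finite_subset[OF _ finite_cartesian_product[OF finW finW]]) auto

lemma finPP: "finite PP" unfolding PP_def by (rule finPairs)

lemma Qsum_pairs:
  "of_nat (card (L'' \<inter> L)) * (\<Sum>a\<in>L' \<inter> sumset L'' L. Q a w) = (\<Sum>p\<in>PP. X (fst p) (snd p)) * Y w"
proof -
  have img: "(\<lambda>p. fst p + snd p) ` PP = L' \<inter> sumset L'' L"
    unfolding PP_def sumset_def by force
  have "(\<Sum>p\<in>PP. X (fst p) (snd p)) * Y w = (\<Sum>p\<in>PP. X (fst p) (snd p) * Y w)"
    by (simp add: sum_distrib_right)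
  also have "\<dots> = (\<Sum>a\<in>L' \<inter> sumset L'' L. \<Sum>p\<in>{p \<in> PP. fst p + snd p = a}. X (fst p) (snd p) * Y w)"
    unfolding img[symmetric] by (rule sum.image_gen) (rule finPP)
  also have "\<dots> = (\<Sum>a\<in>L' \<inter> sumset L'' L. of_nat (card (L'' \<inter> L)) * Q a w)"
  proof (intro sum.cong refl)
    fix a assume a: "a \<in> L' \<inter> sumset L'' L"
    then obtain b0 l0 where bl: "b0 \<in> L''" "l0 \<in> L" "a = b0 + l0" unfolding sumset_def by auto
    have fib: "{p \<in> PP. fst p + snd p = a} = {p \<in> L'' \<times> L. fst p + snd p = b0 + l0}"
      unfolding PP_def using a bl by auto
    have "(\<Sum>p\<in>{p \<in> PP. fst p + snd p = a}. X (fst p) (snd p) * Y w)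
        = (\<Sum>p\<in>{p \<in> L'' \<times> L. fst p + snd p = b0 + l0}. Q a w)"
      unfolding fib
    proof (intro sum.cong refl)
      fix p assume p: "p \<in> {p \<in> L'' \<times> L. fst p + snd p = b0 + l0}"
      hence "Q a w = Q (fst p + snd p) w" using bl by simp
      also have "\<dots> = X (fst p) (snd p) * Y w" using p by (intro Q_good) auto
      finally show "X (fst p) (snd p) * Y w = Q a w" by simp
    qed
    also have "\<dots> = of_nat (card (L'' \<inter> L)) * Q a w"
      using fiber_card[OF Lag_subgrp[OF L''] Lag_subgrp[OF L] bl(1,2)] by simp
    finally show "(\<Sum>p\<in>{p \<in> PP. fst p + snd p = a}. X (fst p) (snd p) * Y w) = of_nat (card (L'' \<inter> L)) * Q a w" .
  qed
  also have "\<dots> = of_nat (card (L'' \<inter> L)) * (\<Sum>a\<in>L' \<inter> sumset L'' L. Q a w)"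
    by (simp add: sum_distrib_left)
  finally show ?thesis by simp
qed

lemma PP_SW: "(\<Sum>p\<in>PP. X (fst p) (snd p)) = of_nat (card (L' \<inter> L'')) * SW \<psi> \<eta> L L' L''"
proof -
  define PP' where "PP' = {q \<in> L' \<times> L''. fst q + snd q \<in> L}"
  have "(\<Sum>p\<in>PP. X (fst p) (snd p)) = (\<Sum>q\<in>PP'. X (fst q) (snd q))"
  proof (rule sum.reindex_bij_witness[of PP "\<lambda>q. (- snd q, fst q + snd q)" "\<lambda>p. (fst p + snd p, - fst p)"])
    fix p assume p: "p \<in> PP"
    show "(- snd (fst p + snd p, - fst p), fst (fst p + snd p, - fst p) + snd (fst p + snd p, - fst p)) = p"
      by simp
    show "(fst p + snd p, - fst p) \<in> PP'" using p Lag_props(3)[OF L''] unfolding PP_def PP'_def by auto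
    have "X (fst p + snd p) (- fst p) = cnj (X (fst p) (fst p) * X (snd p) (fst p))"
      by (simp add: X_rneg X_ladd)
    also have "\<dots> = X (fst p) (snd p)" by (simp add: X_cnj)
    finally show "X (fst (fst p + snd p, - fst p)) (snd (fst p + snd p, - fst p)) = X (fst p) (snd p)" by simp
  next
    fix q assume q: "q \<in> PP'"
    show "(fst (- snd q, fst q + snd q) + snd (- snd q, fst q + snd q), - fst (- snd q, fst q + snd q)) = q"
      by simp
    show "(- snd q, fst q + snd q) \<in> PP" using q Lag_props(3)[OF L''] unfolding PP_def PP'_def by auto
  qed
  also have "\<dots> = (\<Sum>z\<in>L \<inter> sumset L' L''. \<Sum>q\<in>{q \<in> PP'. fst q + snd q = z}. X (fst q) (snd q))"
  proof -
    have img: "(\<lambda>q. fst q + snd q) ` PP' = L \<inter> sumset L' L''" unfolding PP'_def sumset_def by force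
    show ?thesis unfolding img[symmetric] by (rule sum.image_gen) (unfold PP'_def, rule finPairs)
  qed
  also have "\<dots> = (\<Sum>z\<in>L \<inter> sumset L' L''. of_nat (card (L' \<inter> L'')) *
      (let p = (SOME p. fst p \<in> L' \<and> snd p \<in> L'' \<and> fst p + snd p = z) in X (fst p) (snd p)))"
  proof (intro sum.cong refl)
    fix z assume z: "z \<in> L \<inter> sumset L' L''"
    then obtain a0 b0 where ab: "a0 \<in> L'" "b0 \<in> L''" "z = a0 + b0" unfolding sumset_def by auto
    define p where "p = (SOME p. fst p \<in> L' \<and> snd p \<in> L'' \<and> fst p + snd p = z)"
    have "\<exists>p. fst p \<in> L' \<and> snd p \<in> L'' \<and> fst p + snd p = z" using ab by (intro exI[of _ "(a0, b0)"]) simp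
    hence p: "fst p \<in> L' \<and> snd p \<in> L'' \<and> fst p + snd p = z" unfolding p_def by (rule someI_ex)
    have fib: "{q \<in> PP'. fst q + snd q = z} = {q \<in> L' \<times> L''. fst q + snd q = a0 + b0}"
      unfolding PP'_def using z ab by auto
    have "(\<Sum>q\<in>{q \<in> PP'. fst q + snd q = z}. X (fst q) (snd q))
        = (\<Sum>q\<in>{q \<in> L' \<times> L''. fst q + snd q = a0 + b0}. X (fst p) (snd p))"
      unfolding fib
    proof (intro sum.cong refl)
      fix q assume "q \<in> {q \<in> L' \<times> L''. fst q + snd q = a0 + b0}"
      thus "X (fst q) (snd q) = X (fst p) (snd p)" using p ab
        by (intro X_indep[OF L' L'']) auto
    qed
    also have "\<dots> = of_nat (card (L' \<inter> L'')) * X (fst p) (snd p)"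
      using fiber_card[OF Lag_subgrp[OF L'] Lag_subgrp[OF L''] ab(1,2)] by simp
    finally show "(\<Sum>q\<in>{q \<in> PP'. fst q + snd q = z}. X (fst q) (snd q)) = of_nat (card (L' \<inter> L'')) *
      (let p = (SOME p. fst p \<in> L' \<and> snd p \<in> L'' \<and> fst p + snd p = z) in X (fst p) (snd p))"
      unfolding p_def Let_def .
  qed
  also have "\<dots> = of_nat (card (L' \<inter> L'')) * SW \<psi> \<eta> L L' L''"
    unfolding SW_def sumset_def by (simp add: sum_distrib_left)
  finally show ?thesis .
qed

lemma comp_expand:
  "gamma \<psi> \<eta> L'' L' (gamma \<psi> \<eta> L' L f) w =
     complex_of_real (1 / sqrt (real (card L' * card (L' \<inter> L'')))) *
     complex_of_real (1 / sqrt (real (card L * card (L \<inter> L')))) * (\<Sum>a\<in>L'. Q a w)"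
proof -
  have "(\<Sum>a\<in>L'. Q a w) = (\<Sum>b\<in>L''. \<Sum>a\<in>L'. cnj (X w b) * (cnj (X (w + b) a) * f (w + b + a)))"
    unfolding Q_def rho_def by (rule sum.swap)
  thus ?thesis unfolding gamma_def by (simp add: sum_distrib_left sum_divide_distrib mult_ac)
qed

lemma gamma_Y: "gamma \<psi> \<eta> L'' L f w = complex_of_real (1 / sqrt (real (card L * card (L \<inter> L'')))) * Y w"
  unfolding gamma_def Y_def rho_def by simp

lemma part_d: "gamma \<psi> \<eta> L'' L' (gamma \<psi> \<eta> L' L f) = (\<lambda>w. mu \<psi> \<eta> L'' L' L * gamma \<psi> \<eta> L'' L f w)"
proof
  fix w
  define n where "n = card L"
  define p where "p = card (L \<inter> L')"
  define q where "q = card (L' \<inter> L'')"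
  define r where "r = card (L \<inter> L'')"
  have cL': "card L' = n" unfolding n_def using card_Lag_eq[OF L L'] by simp
  have c1: "card (L'' \<inter> L) = r" "card (L'' \<inter> L') = q" "card (L' \<inter> L) = p"
    unfolding r_def q_def p_def by (simp_all add: Int_commute)
  have pos: "n > 0" "p > 0" "q > 0" "r > 0" unfolding n_def p_def q_def r_def
    using card_Lag_pos[OF L L'] card_Lag_pos[OF L' L''] card_Lag_pos[OF L L''] card_pos[OF Lag_props(1)[OF L]]
    by auto
  define S where "S = SW \<psi> \<eta> L L' L''"
  have "of_nat r * (\<Sum>a\<in>L'. Q a w) = of_nat q * S * Y w"
    using Qsum_pairs[of w] Qsum_restrict[of w] PP_SW c1 unfolding S_def q_def by simp
  hence QS: "(\<Sum>a\<in>L'. Q a w) = of_nat q * S * Y w / of_nat r" using pos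
    by (simp add: field_simps)
  have ce: "1 / sqrt (real n * real q) * (1 / sqrt (real n * real p)) * real q / real r =
      sqrt (real q / (real r * real p * real n)) * (1 / sqrt (real n * real r))"
    by (rule const_eq) (use pos in auto)
  have "gamma \<psi> \<eta> L'' L' (gamma \<psi> \<eta> L' L f) w =
      complex_of_real (1 / sqrt (real n * real q)) * complex_of_real (1 / sqrt (real n * real p)) *
      (of_nat q * S * Y w / of_nat r)"
    unfolding comp_expand QS cL' by (simp add: n_def p_def q_def)
  also have "\<dots> = complex_of_real (1 / sqrt (real n * real q) * (1 / sqrt (real n * real p)) * real q / real r) * S * Y w"
    by (simp add: field_simps)
  also have "\<dots> = complex_of_real (sqrt (real q / (real r * real p * real n)) * (1 / sqrt (real n * real r))) * S * Y w"
    unfolding ce ..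
  also have "\<dots> = mu \<psi> \<eta> L'' L' L * gamma \<psi> \<eta> L'' L f w"
    unfolding gamma_Y mu_def c1 S_def by (simp add: n_def r_def field_simps)
  finally show "gamma \<psi> \<eta> L'' L' (gamma \<psi> \<eta> L' L f) w = mu \<psi> \<eta> L'' L' L * gamma \<psi> \<eta> L'' L f w" .
qed

end

lemma gamma_EL: assumes L': "L' \<in> Lag" shows "gamma \<psi> \<eta> L' L f \<in> EL \<psi> \<eta> L'"
  unfolding EL_def
proof (intro CollectI allI impI)
  fix w z assume z: "z \<in> L'"
  define H where "H = (\<lambda>a. cnj (X w a) * f (w + a))"
  have "(\<Sum>a\<in>L'. cnj (X (w + z) a) * f (w + z + a)) = (\<Sum>a\<in>L'. X w z * H (a + z))"
  proof (intro sum.cong refl)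
    fix a assume a: "a \<in> L'"
    have "X w z * H (a + z) = (X w z * cnj (X w z)) * cnj (X w a) * f (w + (a + z))"
      unfolding H_def by (simp add: X_radd mult_ac)
    also have "\<dots> = cnj (X (w + z) a) * f (w + z + a)"
      using Lag_X[OF L' z a] by (simp add: X_mult_cnj X_ladd add_ac)
    finally show "cnj (X (w + z) a) * f (w + z + a) = X w z * H (a + z)" by simp
  qed
  also have "\<dots> = X w z * (\<Sum>a\<in>L'. H (a + z))" by (simp add: sum_distrib_left)
  also have "(\<Sum>a\<in>L'. H (a + z)) = (\<Sum>a\<in>L'. H a)"
    by (rule shift_sum) (use Lag_props[OF L'] z in auto)
  finally show "gamma \<psi> \<eta> L' L f (w + z) = chi \<psi> \<eta> w z * gamma \<psi> \<eta> L' L f w"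
    unfolding gamma_def H_def by (simp add: mult_ac)
qed

lemma gamma_id: assumes L: "L \<in> Lag" and f: "f \<in> EL \<psi> \<eta> L" shows "gamma \<psi> \<eta> L L f = f"
proof
  fix w
  have n: "card L > 0" using card_pos[OF Lag_props(1)[OF L]] .
  have "(\<Sum>a\<in>L. cnj (X w a) * f (w + a)) = (\<Sum>a\<in>L. f w)"
  proof (intro sum.cong refl)
    fix a assume "a \<in> L"
    hence "f (w + a) = X w a * f w" using f unfolding EL_def by blast
    thus "cnj (X w a) * f (w + a) = f w" by (simp add: mult.assoc[symmetric] X_cnj_mult)
  qed
  moreover have "sqrt (real (card L * card L)) = real (card L)" by simp
  ultimately show "gamma \<psi> \<eta> L L f w = f w" unfolding gamma_def using n by simp
qed

lemma inner_cnj: "cnj (inner_W h f) = inner_W f h" unfolding inner_W_def by (simp add: mult.commute)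

lemma inner_gamma:
  assumes L: "L \<in> Lag" and L': "L' \<in> Lag" and h: "h \<in> EL \<psi> \<eta> L'"
  shows "inner_W (gamma \<psi> \<eta> L' L f) h =
    complex_of_real (1 / sqrt (real (card L * card (L \<inter> L')))) * of_nat (card L') * inner_W f h"
proof -
  have univ: "\<forall>x\<in>UNIV. \<forall>y\<in>UNIV. x + y \<in> (UNIV :: ('s \<times> 's) set)" "\<forall>x\<in>UNIV. - x \<in> (UNIV :: ('s \<times> 's) set)" by auto
  have inner: "(\<Sum>w\<in>UNIV. cnj (X w a) * f (w + a) * cnj (h w)) = inner_W f h" if a: "a \<in> L'" for a
  proof -
    have "(\<Sum>w\<in>UNIV. cnj (X w a) * f (w + a) * cnj (h w)) = (\<Sum>w\<in>UNIV. f (w + a) * cnj (h (w + a)))"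
    proof (intro sum.cong refl)
      fix w
      have "h (w + a) = X w a * h w" using h a unfolding EL_def by blast
      hence "cnj (h (w + a)) = cnj (X w a) * cnj (h w)" by simp
      thus "cnj (X w a) * f (w + a) * cnj (h w) = f (w + a) * cnj (h (w + a))" by (simp add: mult_ac)
    qed
    also have "\<dots> = inner_W f h" unfolding inner_W_def
      by (rule shift_sum[where F = "\<lambda>w. f w * cnj (h w)"]) (use univ in auto)
    finally show ?thesis .
  qed
  have "inner_W (gamma \<psi> \<eta> L' L f) h = complex_of_real (1 / sqrt (real (card L * card (L \<inter> L')))) *
      (\<Sum>a\<in>L'. \<Sum>w\<in>UNIV. cnj (X w a) * f (w + a) * cnj (h w))"
    unfolding inner_W_def gamma_def by (subst sum.swap) (simp add: sum_distrib_left sum_distrib_right sum_divide_distrib mult_ac)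
  also have "\<dots> = complex_of_real (1 / sqrt (real (card L * card (L \<inter> L')))) * (\<Sum>a\<in>L'. inner_W f h)"
    using inner by simp
  finally show ?thesis by (simp add: mult_ac)
qed

lemma part_a:
  assumes L: "L \<in> Lag" and L': "L' \<in> Lag" and f: "f \<in> EL \<psi> \<eta> L" and h: "h \<in> EL \<psi> \<eta> L'"
  shows "inner_W (gamma \<psi> \<eta> L' L f) h = inner_W f (gamma \<psi> \<eta> L L' h)"
proof -
  have "inner_W f (gamma \<psi> \<eta> L L' h) = cnj (inner_W (gamma \<psi> \<eta> L L' h) f)" by (simp add: inner_cnj)
  also have "\<dots> = cnj (complex_of_real (1 / sqrt (real (card L' * card (L' \<inter> L)))) * of_nat (card L) * inner_W h f)"
    using inner_gamma[OF L' L f] by simp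
  also have "\<dots> = complex_of_real (1 / sqrt (real (card L * card (L \<inter> L')))) * of_nat (card L') * inner_W f h"
    using card_Lag_eq[OF L L'] by (simp add: inner_cnj Int_commute)
  also have "\<dots> = inner_W (gamma \<psi> \<eta> L' L f) h" using inner_gamma[OF L L' h] by simp
  finally show ?thesis by simp
qed

lemma mu_one: assumes L: "L \<in> Lag" and L': "L' \<in> Lag" shows "mu \<psi> \<eta> L L' L = 1"
proof -
  have set: "L \<inter> {a + b | a b. a \<in> L' \<and> b \<in> L} = L"
  proof
    show "L \<subseteq> L \<inter> {a + b | a b. a \<in> L' \<and> b \<in> L}"
    proof
      fix z assume z: "z \<in> L"
      hence "z = 0 + z \<and> 0 \<in> L' \<and> z \<in> L" using Lag_props(1)[OF L'] by simp
      thus "z \<in> L \<inter> {a + b | a b. a \<in> L' \<and> b \<in> L}" using z by blast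
    qed
  qed blast
  have "SW \<psi> \<eta> L L' L = (\<Sum>z\<in>L. 1)"
    unfolding SW_def set
  proof (intro sum.cong refl)
    fix z assume z: "z \<in> L"
    define p where "p = (SOME p. fst p \<in> L' \<and> snd p \<in> L \<and> fst p + snd p = z)"
    have "\<exists>p. fst p \<in> L' \<and> snd p \<in> L \<and> fst p + snd p = z" using z Lag_props(1)[OF L']
      by (intro exI[of _ "(0, z)"]) simp
    hence p: "fst p \<in> L' \<and> snd p \<in> L \<and> fst p + snd p = z" unfolding p_def by (rule someI_ex)
    have "X (fst p) (snd p) = X 0 z" using p z Lag_props(1)[OF L'] by (intro X_indep[OF L' L]) auto
    thus "(let p = SOME p. fst p \<in> L' \<and> snd p \<in> L \<and> fst p + snd p = z in X (fst p) (snd p)) = 1"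
      unfolding p_def[symmetric] Let_def by simp
  qed
  hence SW: "SW \<psi> \<eta> L L' L = of_nat (card L)" by simp
  have n: "card L > 0" using card_pos[OF Lag_props(1)[OF L]] .
  have p: "card (L \<inter> L') > 0" using card_Lag_pos[OF L L'] .
  have "sqrt (real (card (L \<inter> L')) / real (card (L \<inter> L) * card (L' \<inter> L) * card L)) = 1 / real (card L)"
    using n p by (simp add: Int_commute real_sqrt_divide real_sqrt_mult field_simps)
  thus ?thesis unfolding mu_def SW using n by simp
qed

lemma part_c:
  assumes L: "L \<in> Lag" and L': "L' \<in> Lag" and f: "f \<in> EL \<psi> \<eta> L"
  shows "gamma \<psi> \<eta> L L' (gamma \<psi> \<eta> L' L f) = f"
  using part_d[OF L L' L f] mu_one[OF L L'] gamma_id[OF L f] by simp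

lemma part_b:
  assumes L: "L \<in> Lag" and L': "L' \<in> Lag" and f: "f \<in> EL \<psi> \<eta> L" and h: "h \<in> EL \<psi> \<eta> L"
  shows "inner_W (gamma \<psi> \<eta> L' L f) (gamma \<psi> \<eta> L' L h) = inner_W f h"
  using part_a[OF L L' f gamma_EL[OF L']] part_c[OF L L' h] by simp

lemma equivariance:
  assumes GH: "\<And>w. G (H w) = w" "\<And>w. H (G w) = w" and Gadd: "\<And>u v. G (u + v) = G u + G v"
    and GB: "(\<forall>u v. B (G u) (G v) = B u v) \<or> (\<forall>u v. B (H u) (H v) = B u v)"
  shows "(\<lambda>w. gamma \<psi> \<eta> L' L f (H w)) = gamma \<psi> \<eta> (G ` L') (G ` L) (\<lambda>w. f (H w))"
proof
  fix w
  have GB': "B (G u) (G v) = B u v" for u v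
    using GB GH by metis
  have Hadd: "H (x + y) = H x + H y" for x y
  proof -
    have "G (H x + H y) = x + y" by (simp add: Gadd GH)
    hence "H (G (H x + H y)) = H (x + y)" by simp
    thus ?thesis using GH by simp
  qed
  have inj: "inj G" by (metis GH(2) injI)
  have cardL: "card (G ` L) = card L" using inj by (simp add: card_image inj_on_subset)
  have cardI: "card (G ` L \<inter> G ` L') = card (L \<inter> L')"
    using inj by (simp add: image_Int[symmetric] card_image inj_on_subset)
  have "(\<Sum>e\<in>G ` L'. cnj (X w e) * f (H (w + e))) = (\<Sum>a\<in>L'. cnj (X w (G a)) * f (H (w + G a)))"
    by (rule sum.reindex[unfolded comp_def]) (rule inj_on_subset[OF inj], simp)
  also have "\<dots> = (\<Sum>a\<in>L'. cnj (X (H w) a) * f (H w + a))"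
  proof (intro sum.cong refl)
    fix a
    have "X w (G a) = X (G (H w)) (G a)" using GH by simp
    also have "\<dots> = X (H w) a" by (simp add: X_def' GB')
    finally show "cnj (X w (G a)) * f (H (w + G a)) = cnj (X (H w) a) * f (H w + a)"
      by (simp add: Hadd GH)
  qed
  finally show "gamma \<psi> \<eta> L' L f (H w) = gamma \<psi> \<eta> (G ` L') (G ` L) (\<lambda>w. f (H w)) w"
    unfolding gamma_def cardL cardI by simp
qed

lemma mat_mult_assoc: "mat_mult (mat_mult g h) k = mat_mult g (mat_mult h k)"
  by (auto simp: mat_mult_def algebra_simps split: prod.splits)

lemma mat_one_left: "mat_mult mat_one g = g" by (auto simp: mat_mult_def mat_one_def split: prod.splits)
lemma mat_one_right: "mat_mult g mat_one = g" by (auto simp: mat_mult_def mat_one_def split: prod.splits)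

lemma mat_inv_eq: assumes "mat_mult g h = mat_one" "mat_mult h g = mat_one" shows "mat_inv g = h"
  unfolding mat_inv_def
proof (rule the_equality)
  show "mat_mult g h = mat_one \<and> mat_mult h g = mat_one" using assms by simp
  fix h' assume h': "mat_mult g h' = mat_one \<and> mat_mult h' g = mat_one"
  have "h' = mat_mult h' (mat_mult g h)" using assms by (simp add: mat_one_right)
  also have "\<dots> = mat_mult (mat_mult h' g) h" by (simp add: mat_mult_assoc)
  also have "\<dots> = h" using h' by (simp add: mat_one_left)
  finally show "h' = h" .
qed

lemma SL_inv:
  assumes g: "(a, b, c, d) \<in> SLstar star"
  shows "mat_mult (a, b, c, d) (star d, - star b, - star c, star a) = mat_one"
        "mat_mult (star d, - star b, - star c, star a) (a, b, c, d) = mat_one"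
proof -
  have c: "a * star b = b * star a" "c * star d = d * star c" "star a * c = star c * a" "star b * d = star d * b"
     "a * star d - b * star c = 1" "star a * d - star c * b = 1" using g unfolding SLstar_def by auto
  have s5: "d * star a - c * star b = 1" using arg_cong[OF c(5), of star] by (simp add: star_diff star_mult)
  have s6: "star d * a - star b * c = 1" using arg_cong[OF c(6), of star] by (simp add: star_diff star_mult)
  show "mat_mult (a, b, c, d) (star d, - star b, - star c, star a) = mat_one"
    using c s5 by (simp add: mat_mult_def mat_one_def algebra_simps)
  show "mat_mult (star d, - star b, - star c, star a) (a, b, c, d) = mat_one"
    using c s6 by (simp add: mat_mult_def mat_one_def algebra_simps)
qed

lemma SL_inv_ex: "g \<in> SLstar star \<Longrightarrow> \<exists>h. mat_mult g h = mat_one \<and> mat_mult h g = mat_one"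
  using SL_inv by (cases g) (metis prod_cases4)

lemma col_comp: "col_act smul g (col_act smul h w) = col_act smul (mat_mult g h) w"
  by (auto simp: col_act_def mat_mult_def smul_add smul_radd smul_mult add_ac split: prod.splits)
lemma col_one: "col_act smul mat_one w = w" by (simp add: col_act_def mat_one_def)
lemma col_add: "col_act smul g (u + v) = col_act smul g u + col_act smul g v"
  by (auto simp: col_act_def smul_add add_ac split: prod.splits)

lemma row_comp: "row_mult star smul (row_mult star smul w g) h = row_mult star smul w (mat_mult g h)"
  by (auto simp: row_mult_def mat_mult_def smul_add smul_radd smul_mult star_add star_mult add_ac split: prod.splits)
lemma row_one: "row_mult star smul w mat_one = w" by (simp add: row_mult_def mat_one_def)
lemma row_add: "row_mult star smul (u + v) g = row_mult star smul u g + row_mult star smul v g"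
  by (auto simp: row_mult_def smul_add add_ac split: prod.splits)

lemma col_B:
  assumes g: "(a, b, c, d) \<in> SLstar star"
  shows "B (col_act smul (a, b, c, d) u) (col_act smul (a, b, c, d) v) = B u v"
proof -
  have c: "star a * c = star c * a" "star b * d = star d * b" "star a * d - star c * b = 1" using g unfolding SLstar_def by auto
  have s6: "star d * a - star b * c = 1" using arg_cong[OF c(3), of star] by (simp add: star_diff star_mult)
  have h1: "star a * d = 1 + star c * b" using c(3) by (simp add: algebra_simps)
  have h2: "star d * a = 1 + star b * c" using s6 by (simp add: algebra_simps)
  show ?thesis
    by (simp add: symB_def col_act_def eta_ladd eta_radd eta_smul smul_mult[symmetric] c(1,2) h1 h2 smul_radd)
qed

lemma row_B:
  assumes g: "(a, b, c, d) \<in> SLstar star"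
  shows "B (row_mult star smul u (a, b, c, d)) (row_mult star smul v (a, b, c, d)) = B u v"
proof -
  have c: "a * star b = b * star a" "c * star d = d * star c" "a * star d - b * star c = 1" using g unfolding SLstar_def by auto
  have s5: "d * star a - c * star b = 1" using arg_cong[OF c(3), of star] by (simp add: star_diff star_mult)
  have h1: "a * star d = 1 + b * star c" using c(3) by (simp add: algebra_simps)
  have h2: "d * star a = 1 + c * star b" using s5 by (simp add: algebra_simps)
  show ?thesis
    by (simp add: symB_def row_mult_def eta_ladd eta_radd eta_bal smul_mult[symmetric] c(1,2) h1 h2 smul_radd)
qed

end

theorem mainTheorem3:
  fixes alg :: "'k::field \<Rightarrow> 'a::ring_1" and star :: "'a \<Rightarrow> 'a"
    and smul :: "'a \<Rightarrow> 's::ab_group_add \<Rightarrow> 's" and \<eta> :: "'s \<Rightarrow> 's \<Rightarrow> 'k"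
    and \<psi> :: "'k \<Rightarrow> complex" and act :: "'a mat2 \<Rightarrow> 's \<times> 's \<Rightarrow> 's \<times> 's"
  assumes "finite (UNIV :: 'k set)" and "odd CHAR('k)"
    and "finite (UNIV :: 'a set)" and "finite (UNIV :: 's set)"
    and "k_algebra_with_involution alg star"
    and "self_dual_module alg star smul \<eta>"
    and "nontrivial_character \<psi>"
    and "act = col_act smul \<or> act = row_act star smul"
    and "\<forall>g\<in>SLstar star. \<forall>L\<in>lagrangians star smul \<eta>. act g ` L \<in> lagrangians star smul \<eta>"
  shows
    "(\<forall>L\<in>lagrangians star smul \<eta>. \<forall>L'\<in>lagrangians star smul \<eta>.
        \<forall>f\<in>EL \<psi> \<eta> L. gamma \<psi> \<eta> L' L f \<in> EL \<psi> \<eta> L')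
   \<and> (\<forall>L\<in>lagrangians star smul \<eta>. \<forall>L'\<in>lagrangians star smul \<eta>.
        \<forall>f\<in>EL \<psi> \<eta> L. \<forall>h\<in>EL \<psi> \<eta> L'.
          inner_W (gamma \<psi> \<eta> L' L f) h = inner_W f (gamma \<psi> \<eta> L L' h))
   \<and> (\<forall>L\<in>lagrangians star smul \<eta>. \<forall>L'\<in>lagrangians star smul \<eta>.
        \<forall>f\<in>EL \<psi> \<eta> L. \<forall>h\<in>EL \<psi> \<eta> L.
          inner_W (gamma \<psi> \<eta> L' L f) (gamma \<psi> \<eta> L' L h) = inner_W f h)
   \<and> (\<forall>L\<in>lagrangians star smul \<eta>. \<forall>L'\<in>lagrangians star smul \<eta>.
        \<forall>f\<in>EL \<psi> \<eta> L. gamma \<psi> \<eta> L L' (gamma \<psi> \<eta> L' L f) = gamma \<psi> \<eta> L L f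
                      \<and> gamma \<psi> \<eta> L L f = f)
   \<and> (\<forall>L\<in>lagrangians star smul \<eta>. \<forall>L'\<in>lagrangians star smul \<eta>. \<forall>L''\<in>lagrangians star smul \<eta>.
        \<forall>\<zeta>\<in>L \<inter> {a + b | a b. a \<in> L' \<and> b \<in> L''}. \<forall>a\<in>L'. \<forall>b\<in>L''. \<forall>a'\<in>L'. \<forall>b'\<in>L''.
          a + b = \<zeta> \<longrightarrow> a' + b' = \<zeta> \<longrightarrow> chi \<psi> \<eta> a b = chi \<psi> \<eta> a' b')
   \<and> (\<forall>L\<in>lagrangians star smul \<eta>. \<forall>L'\<in>lagrangians star smul \<eta>. \<forall>L''\<in>lagrangians star smul \<eta>.
        \<forall>f\<in>EL \<psi> \<eta> L. gamma \<psi> \<eta> L'' L' (gamma \<psi> \<eta> L' L f) = (\<lambda>w. mu \<psi> \<eta> L'' L' L * gamma \<psi> \<eta> L'' L f w))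
   \<and> (\<forall>g\<in>SLstar star. \<forall>L\<in>lagrangians star smul \<eta>. \<forall>L'\<in>lagrangians star smul \<eta>.
        \<forall>f\<in>EL \<psi> \<eta> L. tau act g (gamma \<psi> \<eta> L' L f) = gamma \<psi> \<eta> (act g ` L') (act g ` L) (tau act g f))"
proof -
  interpret ctx alg star smul \<eta> \<psi> by unfold_locales (use assms in auto)
  have E: "tau act g (gamma \<psi> \<eta> L' L f) = gamma \<psi> \<eta> (act g ` L') (act g ` L) (tau act g f)"
    if g: "g \<in> SLstar star" for g L L' f
  proof -
    obtain h where h: "mat_mult g h = mat_one" "mat_mult h g = mat_one" using SL_inv_ex[OF g] by blast
    have ig: "mat_inv g = h" by (rule mat_inv_eq[OF h])
    have ih: "mat_inv h = g" by (rule mat_inv_eq[OF h(2) h(1)])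
    obtain a b c d where gd: "g = (a, b, c, d)" by (cases g) auto
    have gS: "(a, b, c, d) \<in> SLstar star" using g gd by simp
    show ?thesis using assms(8)
    proof
      assume act: "act = col_act smul"
      have "(\<lambda>w. gamma \<psi> \<eta> L' L f (col_act smul h w)) =
          gamma \<psi> \<eta> (col_act smul g ` L') (col_act smul g ` L) (\<lambda>w. f (col_act smul h w))"
      proof (rule equivariance)
        show "col_act smul g (col_act smul h w) = w" for w by (simp add: col_comp h col_one)
        show "col_act smul h (col_act smul g w) = w" for w by (simp add: col_comp h col_one)
        show "col_act smul g (u + v) = col_act smul g u + col_act smul g v" for u v by (rule col_add)
        show "(\<forall>u v. B (col_act smul g u) (col_act smul g v) = B u v) \<or> (\<forall>u v. B (col_act smul h u) (col_act smul h v) = B u v)"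
          using col_B[OF gS] gd by simp
      qed
      thus ?thesis unfolding act tau_def ig by simp
    next
      assume act: "act = row_act star smul"
      have "(\<lambda>w. gamma \<psi> \<eta> L' L f (row_mult star smul w g)) =
          gamma \<psi> \<eta> ((\<lambda>w. row_mult star smul w h) ` L') ((\<lambda>w. row_mult star smul w h) ` L) (\<lambda>w. f (row_mult star smul w g))"
      proof (rule equivariance)
        show "row_mult star smul (row_mult star smul w g) h = w" for w by (simp add: row_comp h row_one)
        show "row_mult star smul (row_mult star smul w h) g = w" for w by (simp add: row_comp h row_one)
        show "row_mult star smul (u + v) h = row_mult star smul u h + row_mult star smul v h" for u v by (rule row_add)
        show "(\<forall>u v. B (row_mult star smul u h) (row_mult star smul v h) = B u v) \<or> (\<forall>u v. B (row_mult star smul u g) (row_mult star smul v g) = B u v)"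
          using row_B[OF gS] gd by simp
      qed
      thus ?thesis unfolding act tau_def row_act_def ig ih by simp
    qed
  qed
  show ?thesis
  proof (intro conjI ballI allI impI)
    show "gamma \<psi> \<eta> L' L f \<in> EL \<psi> \<eta> L'" if "L' \<in> Lag" for L L' f using gamma_EL that by blast
  next
    show "inner_W (gamma \<psi> \<eta> L' L f) h = inner_W f (gamma \<psi> \<eta> L L' h)"
      if "L \<in> Lag" "L' \<in> Lag" "f \<in> EL \<psi> \<eta> L" "h \<in> EL \<psi> \<eta> L'" for L L' f h using part_a that by blast
  next
    show "inner_W (gamma \<psi> \<eta> L' L f) (gamma \<psi> \<eta> L' L h) = inner_W f h"
      if "L \<in> Lag" "L' \<in> Lag" "f \<in> EL \<psi> \<eta> L" "h \<in> EL \<psi> \<eta> L" for L L' f h using part_b that by blast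
  next
    show "gamma \<psi> \<eta> L L' (gamma \<psi> \<eta> L' L f) = gamma \<psi> \<eta> L L f"
      if "L \<in> Lag" "L' \<in> Lag" "f \<in> EL \<psi> \<eta> L" for L L' f
      using part_c[OF that] gamma_id[OF that(1,3)] by simp
  next
    show "gamma \<psi> \<eta> L L f = f" if "L \<in> Lag" "f \<in> EL \<psi> \<eta> L" for L f using gamma_id that by blast
  next
    show "chi \<psi> \<eta> a b = chi \<psi> \<eta> a' b'"
      if "L' \<in> Lag" "L'' \<in> Lag" "a \<in> L'" "b \<in> L''" "a' \<in> L'" "b' \<in> L''" "a + b = \<zeta>" "a' + b' = \<zeta>"
      for L' L'' \<zeta> a b a' b' using X_indep[of L' L'' a a' b b'] that by simp
  next
    show "gamma \<psi> \<eta> L'' L' (gamma \<psi> \<eta> L' L f) = (\<lambda>w. mu \<psi> \<eta> L'' L' L * gamma \<psi> \<eta> L'' L f w)"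
      if "L \<in> Lag" "L' \<in> Lag" "L'' \<in> Lag" "f \<in> EL \<psi> \<eta> L" for L L' L'' f using part_d that by blast
  next
    show "tau act g (gamma \<psi> \<eta> L' L f) = gamma \<psi> \<eta> (act g ` L') (act g ` L) (tau act g f)"
      if "g \<in> SLstar star" for g L L' f using E that by blast
  qed
qed

end
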